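(* Let $S\in\mathbb{R}^{q\times q}$ be unknown, have no eigenvalues with negative real part, and have all entries bounded by $|S_{ij}|\le\epsilon$ for a known $\epsilon>0$. Let $\mathcal{G}$ be a directed weighted graph on nodes $\mathbf{v}_0$ (leader), $\mathbf{v}_1,\dots,\mathbf{v}_N$ (followers) with nonnegative weights $a_{ij}$, containing a directed spanning tree rooted at $\mathbf{v}_0$, whose Laplacian $\mathcal{L}$ has every nonzero entry satisfying $\varepsilon_1\le|\mathcal{L}_{ij}|\le\varepsilon_2$ for constants $0<\varepsilon_1\le\varepsilon_2$. Let $H\in\mathbb{R}^{N\times N}$ be given by $H_{ii}=\sum_{j=0,\,j\neq i}^{N}a_{ij}$ and $H_{ij}=-a_{ij}$ ($i\neq j$, $i,j\ge1$). If $\mu>\dfrac{q\epsilon N(2\varepsilon_2)^{N-1}}{\varepsilon_1^{N}}$, then $(I_N\otimes S)-\mu(H\otimes I_q)$ is Hurwitz.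
   Context: The Laplacian is $\mathcal{L}=\mathcal{D}-\mathcal{A}$ with $\mathcal{A}=(a_{ij})$ ($a_{ij}>0$ iff $\mathbf{v}_i$ receives information from $\mathbf{v}_j$; the leader receives none) and $\mathcal{D}$ the diagonal in-degree matrix; $H$ is its follower block. Hurwitz means all eigenvalues have negative real part. *)

theory Defs
  imports "HOL-Analysis.Analysis"
begin

definition cmat :: "real^'n^'m \<Rightarrow> complex^'n^'m" where
  "cmat A = (\<chi> i j. complex_of_real (A $ i $ j))"

definition mat_eigenvalue :: "real^'n^'n \<Rightarrow> complex \<Rightarrow> bool" where
  "mat_eigenvalue A l \<longleftrightarrow> (\<exists>v::complex^'n. v \<noteq> 0 \<and> cmat A *v v = l *s v)"

definition hurwitz :: "real^'n^'n \<Rightarrow> bool" where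
  "hurwitz A \<longleftrightarrow> (\<forall>l. mat_eigenvalue A l \<longrightarrow> Re l < 0)"

text \<open>Kronecker product; row index (i,k) plays the role of row (i-1)*q + k.\<close>
definition kron :: "real^'b^'a \<Rightarrow> real^'d^'c \<Rightarrow> real^('b \<times> 'd)^('a \<times> 'c)" where
  "kron A B = (\<chi> r c. A $ fst r $ fst c * B $ snd r $ snd c)"

text \<open>Graph with node set \<open>'n option\<close>: \<open>None\<close> is the leader v0, \<open>Some i\<close> the followers.
  \<open>a i j > 0\<close> iff node i receives information from node j.\<close>

definition laplacian :: "('v::finite \<Rightarrow> 'v \<Rightarrow> real) \<Rightarrow> 'v \<Rightarrow> 'v \<Rightarrow> real" where
  "laplacian a i j = (if i = j then (\<Sum>k\<in>UNIV - {i}. a i k) else - a i j)"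

definition follower_matrix :: "('n::finite option \<Rightarrow> 'n option \<Rightarrow> real) \<Rightarrow> real^'n^'n" where
  "follower_matrix a = (\<chi> i j. if i = j then (\<Sum>k\<in>UNIV - {Some i}. a (Some i) k)
                                  else - a (Some i) (Some j))"

text \<open>A directed spanning tree rooted at the leader: every follower has a parent
  (an in-neighbour, i.e. an edge parent \<rightarrow> follower), and following parents from
  any follower reaches the root (so the parent graph is acyclic, i.e. a tree).\<close>
definition has_spanning_tree_from_leader :: "('n option \<Rightarrow> 'n option \<Rightarrow> real) \<Rightarrow> bool" where
  "has_spanning_tree_from_leader a \<longleftrightarrow>
     (\<exists>p :: 'n \<Rightarrow> 'n option.
        (\<forall>i. a (Some i) (p i) > 0) \<and>
        (\<forall>i. \<exists>k. ((\<lambda>x. case x of None \<Rightarrow> None | Some j \<Rightarrow> p j) ^^ k) (Some i) = None))"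

end

theory Submission
  imports Defs
begin

lemma geom_sum_Suc: fixes r :: real
  shows "(\<Sum>m=1..Suc n. r^m) = r * (1 + (\<Sum>m=1..n. r^m))"
proof (induction n)
  case (Suc n)
  have "(\<Sum>m=1..Suc (Suc n). r^m) = (\<Sum>m=1..Suc n. r^m) + r^Suc (Suc n)" by simp
  also have "\<dots> = r*(1 + (\<Sum>m=1..n. r^m)) + r * r^Suc n" using Suc by simp
  also have "\<dots> = r*(1 + (\<Sum>m=1..Suc n. r^m))" by (simp add: algebra_simps)
  finally show ?case .
qed simp

lemma sum_option_minus:
  fixes g :: "'n::finite option \<Rightarrow> real"
  shows "sum g (UNIV - {Some i}) = g None + (\<Sum>j\<in>UNIV-{i}. g (Some j))"
proof -
  have e: "UNIV - {Some i} = insert None (Some ` (UNIV - {i}))"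
    by (rule set_eqI) (case_tac x, auto)
  have "sum g (UNIV - {Some i}) = g None + sum g (Some ` (UNIV - {i}))"
    unfolding e by (subst sum.insert) auto
  also have "sum g (Some ` (UNIV - {i})) = (\<Sum>j\<in>UNIV-{i}. g (Some j))"
    by (subst sum.reindex) auto
  finally show ?thesis .
qed

lemma sum_pairs:
  fixes f :: "('a::finite \<times> 'b::finite) \<Rightarrow> 'c::comm_monoid_add"
  shows "(\<Sum>z\<in>UNIV. f z) = (\<Sum>j\<in>UNIV. \<Sum>m\<in>UNIV. f (j,m))"
  by (subst sum.cartesian_product) simp

definition dep :: "('n \<Rightarrow> 'n option) \<Rightarrow> 'n option \<Rightarrow> nat" where
  "dep p u = (LEAST k. ((\<lambda>x. case x of None \<Rightarrow> None | Some j \<Rightarrow> p j) ^^ k) u = None)"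

lemma dep_None: "dep p None = 0"
  unfolding dep_def by (rule Least_eq_0) simp

lemma dep_Some:
  assumes "\<exists>k. ((\<lambda>x. case x of None \<Rightarrow> None | Some j \<Rightarrow> p j) ^^ k) (Some i) = None"
  shows "dep p (Some i) = Suc (dep p (p i))"
proof -
  let ?P = "(\<lambda>x. case x of None \<Rightarrow> None | Some j \<Rightarrow> p j)"
  obtain k where k: "(?P ^^ k) (Some i) = None" using assms by blast
  have s: "(?P ^^ Suc m) (Some i) = (?P ^^ m) (p i)" for m
    by (simp add: funpow_Suc_right del: funpow.simps)
  have "dep p (Some i) = (LEAST m. (?P ^^ m) (Some i) = None)" by (simp add: dep_def)
  also have "\<dots> = Suc (LEAST m. (?P ^^ Suc m) (Some i) = None)"
    by (rule Least_Suc[where P="\<lambda>m. (?P ^^ m) (Some i) = None", OF k]) simp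
  also have "\<dots> = Suc (dep p (p i))" by (simp only: s dep_def)
  finally show ?thesis .
qed

lemma dep_levels:
  assumes reach: "\<forall>i. \<exists>k. ((\<lambda>x. case x of None \<Rightarrow> None | Some j \<Rightarrow> p j) ^^ k) (Some i) = None"
  shows "\<forall>i. dep p (Some i) = k + n \<longrightarrow> 1 \<le> k \<longrightarrow> (\<exists>j. dep p (Some j) = k)"
proof (induction n)
  case 0
  then show ?case by auto
next
  case (Suc n)
  show ?case
  proof (intro allI impI)
    fix i assume d: "dep p (Some i) = k + Suc n" and k1: "1 \<le> k"
    have ds: "dep p (Some i) = Suc (dep p (p i))" using dep_Some[of p i] reach by blast
    then have dp: "dep p (p i) = k + n" using d by simp
    then obtain i' where "p i = Some i'" using dep_None[of p] k1 by (cases "p i") auto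
    then show "\<exists>j. dep p (Some j) = k" using Suc.IH dp k1 by auto
  qed
qed

lemma dep_le_card:
  fixes p :: "'n::finite \<Rightarrow> 'n option"
  assumes reach: "\<forall>i. \<exists>k. ((\<lambda>x. case x of None \<Rightarrow> None | Some j \<Rightarrow> p j) ^^ k) (Some i) = None"
  shows "dep p (Some i) \<le> CARD('n)"
proof -
  have "{1..dep p (Some i)} \<subseteq> range (\<lambda>j. dep p (Some j))"
  proof
    fix k assume "k \<in> {1..dep p (Some i)}"
    then have "dep p (Some i) = k + (dep p (Some i) - k)" "1 \<le> k" by auto
    then show "k \<in> range (\<lambda>j. dep p (Some j))"
      using dep_levels[OF reach, of k "dep p (Some i) - k"] by auto
  qed
  then have "card {1..dep p (Some i)} \<le> card (range (\<lambda>j. dep p (Some j)))"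
    by (rule card_mono[rotated]) simp
  also have "\<dots> \<le> CARD('n)" by (rule card_image_le) simp
  finally show ?thesis by simp
qed


lemma graph_vector:
  fixes a :: "'n::finite option \<Rightarrow> 'n option \<Rightarrow> real"
    and \<epsilon>1 \<epsilon>2 :: real
  assumes a_nonneg: "\<forall>i j. a i j \<ge> 0"
    and tree: "has_spanning_tree_from_leader a"
    and eps12: "0 < \<epsilon>1" "\<epsilon>1 \<le> \<epsilon>2"
    and L_bounds: "\<forall>i j. laplacian a i j \<noteq> 0 \<longrightarrow>
                     \<epsilon>1 \<le> \<bar>laplacian a i j\<bar> \<and> \<bar>laplacian a i j\<bar> \<le> \<epsilon>2"
  shows "\<exists>x::'n \<Rightarrow> real. (\<forall>i. 0 < x i \<and> x i \<le> real CARD('n) * (\<epsilon>2/\<epsilon>1)^CARD('n))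
            \<and> (\<forall>i. \<epsilon>2 \<le> (\<Sum>j\<in>UNIV. follower_matrix a $ i $ j * x j))"
proof -
  obtain p where pa: "\<forall>i. a (Some i) (p i) > 0"
    and reach: "\<forall>i. \<exists>k. ((\<lambda>x. case x of None \<Rightarrow> None | Some j \<Rightarrow> p j) ^^ k) (Some i) = None"
    using tree unfolding has_spanning_tree_from_leader_def by blast
  define N where "N = CARD('n)"
  define H where "H = follower_matrix a"
  define r where "r = \<epsilon>2 / \<epsilon>1"
  define h where "h k = (\<Sum>m=1..N-k. r^m)" for k
  define X where "X u = h 0 - h (dep p u)" for u
  define x where "x i = X (Some i)" for i
  have r1: "r \<ge> 1" using eps12 by (simp add: r_def)
  have er: "\<epsilon>1 * r = \<epsilon>2" using eps12 by (simp add: r_def)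
  have hnn: "h k \<ge> 0" for k unfolding h_def using r1 by (intro sum_nonneg) simp
  have hmono: "k \<le> k' \<Longrightarrow> h k' \<le> h k" for k k'
    unfolding h_def using r1 by (intro sum_mono2) auto
  have hrec: "h (d-1) = r * (1 + h d)" if "1 \<le> d" "d \<le> N" for d
  proof -
    have "N - (d-1) = Suc (N - d)" using that by arith
    then show ?thesis unfolding h_def using geom_sum_Suc[of r "N-d"] by simp
  qed
  have h0: "h 0 \<le> real N * r^N"
  proof -
    have "h 0 = (\<Sum>m=1..N. r^m)" unfolding h_def by simp
    also have "\<dots> \<le> (\<Sum>m=1..N. r^N)"
      by (rule sum_mono, rule power_increasing) (use r1 in auto)
    finally have "h 0 \<le> (\<Sum>m=1..N. r^N)" .
    then show ?thesis by simp
  qed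
  have dsom: "dep p (Some i) = Suc (dep p (p i))" for i using dep_Some[of p i] reach by blast
  have dN: "dep p (Some i) \<le> N" for i unfolding N_def using dep_le_card[OF reach] .
  have pne: "p i \<noteq> Some i" for i using dsom[of i] by auto
  have a_p: "a (Some i) (p i) \<ge> \<epsilon>1" for i
  proof -
    have "laplacian a (Some i) (p i) = - a (Some i) (p i)"
      using pne[of i] by (auto simp: laplacian_def)
    then show ?thesis using L_bounds pa by (metis abs_minus_cancel abs_of_pos neg_0_equal_iff_equal order_less_irrefl)
  qed
  define D where "D i = (\<Sum>k\<in>UNIV-{Some i}. a (Some i) k)" for i
  have Dge: "D i \<ge> a (Some i) (p i)" for i
    unfolding D_def using pne[of i] a_nonneg
    by (intro member_le_sum) auto
  have Dle: "D i \<le> \<epsilon>2" for i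
  proof -
    have "laplacian a (Some i) (Some i) = D i" by (simp add: laplacian_def D_def)
    moreover have "D i > 0" using Dge[of i] pa by (meson less_le_trans)
    ultimately show ?thesis using L_bounds by (metis abs_of_pos less_irrefl)
  qed
  have XNone: "X None = 0" by (simp add: X_def dep_None)
  have xpos: "0 < x i" for i
  proof -
    let ?d = "dep p (Some i)"
    have "h (?d - 1) = r * (1 + h ?d)" using hrec[of ?d] dN[of i] dsom[of i] by simp
    moreover have "r * (1 + h ?d) > h ?d" using r1 hnn[of ?d]
      by (smt (verit) mult_le_cancel_right1)
    moreover have "h (?d - 1) \<le> h 0" by (rule hmono) simp
    ultimately show ?thesis by (simp add: x_def X_def)
  qed
  have xle: "x i \<le> real N * r^N" for i using h0 hnn[of "dep p (Some i)"] by (simp add: x_def X_def)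
  have Hx: "\<epsilon>2 \<le> (\<Sum>j\<in>UNIV. H $ i $ j * x j)" for i
  proof -
    let ?d = "dep p (Some i)"
    have e1: "(\<Sum>j\<in>UNIV. H $ i $ j * x j) = D i * x i - (\<Sum>j\<in>UNIV-{i}. a (Some i) (Some j) * x j)"
    proof -
      have "(\<Sum>j\<in>UNIV. H $ i $ j * x j) = H $ i $ i * x i + (\<Sum>j\<in>UNIV-{i}. H $ i $ j * x j)"
        by (rule sum.remove) auto
      also have "(\<Sum>j\<in>UNIV-{i}. H $ i $ j * x j) = (\<Sum>j\<in>UNIV-{i}. - (a (Some i) (Some j) * x j))"
        by (rule sum.cong) (auto simp: H_def follower_matrix_def)
      finally show ?thesis by (simp add: H_def follower_matrix_def D_def sum_negf)
    qed
    have e2: "(\<Sum>k\<in>UNIV-{Some i}. a (Some i) k * X k) = (\<Sum>j\<in>UNIV-{i}. a (Some i) (Some j) * x j)"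
      using sum_option_minus[of "\<lambda>k. a (Some i) k * X k" i] XNone by (simp add: x_def)
    have e3: "(\<Sum>k\<in>UNIV-{Some i}. a (Some i) k * (h 0 - X k)) = h 0 * D i - (\<Sum>k\<in>UNIV-{Some i}. a (Some i) k * X k)"
      by (simp add: D_def algebra_simps sum_subtractf sum_distrib_left)
    have e4: "(\<Sum>k\<in>UNIV-{Some i}. a (Some i) k * (h 0 - X k)) \<ge> a (Some i) (p i) * (h 0 - X (p i))"
      using pne[of i] a_nonneg hnn
      by (intro member_le_sum[where f="\<lambda>k. a (Some i) k * (h 0 - X k)"]) (auto simp: X_def)
    have e5: "h 0 - X (p i) = r * (1 + h ?d)"
      using hrec[of ?d] dN[of i] dsom[of i] by (simp add: X_def)
    have e6: "x i = h 0 - h ?d" by (simp add: x_def X_def)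
    have "(\<Sum>j\<in>UNIV. H $ i $ j * x j) \<ge> a (Some i) (p i) * (r * (1 + h ?d)) - D i * h ?d"
      using e1 e2 e3 e4 e5 e6 by (simp add: algebra_simps)
    moreover have "a (Some i) (p i) * (r * (1 + h ?d)) \<ge> \<epsilon>1 * (r * (1 + h ?d))"
      using a_p[of i] r1 hnn[of ?d] by (intro mult_right_mono) auto
    moreover have "D i * h ?d \<le> \<epsilon>2 * h ?d" using Dle[of i] hnn[of ?d] by (intro mult_right_mono) auto
    moreover have "\<epsilon>1 * (r * (1 + h ?d)) = \<epsilon>2 * (1 + h ?d)" using er by (metis mult.assoc)
    ultimately show ?thesis by (simp add: algebra_simps)
  qed
  show ?thesis
    using xpos xle Hx unfolding N_def r_def H_def by blast
qed


theorem proposition1: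
  fixes S :: "real^'q^'q"
    and a :: "'n::finite option \<Rightarrow> 'n option \<Rightarrow> real"
    and \<epsilon> \<epsilon>1 \<epsilon>2 \<mu> :: real
  assumes S_spec: "\<forall>l. mat_eigenvalue S l \<longrightarrow> Re l \<ge> 0"
    and eps_pos: "\<epsilon> > 0"
    and S_bound: "\<forall>i j. \<bar>S $ i $ j\<bar> \<le> \<epsilon>"
    and a_nonneg: "\<forall>i j. a i j \<ge> 0"
    and leader: "\<forall>j. a None j = 0"
    and tree: "has_spanning_tree_from_leader a"
    and eps12: "0 < \<epsilon>1" "\<epsilon>1 \<le> \<epsilon>2"
    and L_bounds: "\<forall>i j. laplacian a i j \<noteq> 0 \<longrightarrow>
                     \<epsilon>1 \<le> \<bar>laplacian a i j\<bar> \<and> \<bar>laplacian a i j\<bar> \<le> \<epsilon>2"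
    and mu: "\<mu> > real CARD('q) * \<epsilon> * real CARD('n) * (2 * \<epsilon>2) ^ (CARD('n) - 1) / \<epsilon>1 ^ CARD('n)"
  shows "hurwitz (kron (mat 1 :: real^'n^'n) S - \<mu> *\<^sub>R kron (follower_matrix a) (mat 1 :: real^'q^'q))"
proof -
  obtain x :: "'n \<Rightarrow> real" where xpos: "\<And>i. 0 < x i"
    and xle: "\<And>i. x i \<le> real CARD('n) * (\<epsilon>2/\<epsilon>1)^CARD('n)"
    and Hx: "\<And>i. \<epsilon>2 \<le> (\<Sum>j\<in>UNIV. follower_matrix a $ i $ j * x j)"
    using graph_vector[OF a_nonneg tree eps12 L_bounds] by blast
  define N where "N = CARD('n)"
  define Q where "Q = CARD('q)"
  define H where "H = follower_matrix a"
  define M where "M = kron (mat 1 :: real^'n^'n) S - \<mu> *\<^sub>R kron (follower_matrix a) (mat 1 :: real^'q^'q)"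
  have N1: "N \<ge> 1" unfolding N_def by (simp add: Suc_leI)
  have Q0: "real Q * \<epsilon> \<ge> 0" using eps_pos by simp
  have m1: "real Q * \<epsilon> * real N * \<epsilon>2 ^ (N - 1) / \<epsilon>1 ^ N
             \<le> real Q * \<epsilon> * real N * (2 * \<epsilon>2) ^ (N - 1) / \<epsilon>1 ^ N"
    using eps12 Q0 by (intro divide_right_mono mult_left_mono power_mono) auto
  have m2: "real Q * \<epsilon> * (real N * (\<epsilon>2/\<epsilon>1)^N) = \<epsilon>2 * (real Q * \<epsilon> * real N * \<epsilon>2 ^ (N - 1) / \<epsilon>1 ^ N)"
  proof -
    have "\<epsilon>2 ^ N = \<epsilon>2 * \<epsilon>2 ^ (N - 1)" using N1 by (metis Suc_diff_1 less_le_trans zero_less_one power_Suc)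
    then show ?thesis by (simp add: power_divide)
  qed
  have mupos: "\<mu> > 0"
  proof -
    have "0 \<le> real Q * \<epsilon> * real N * (2 * \<epsilon>2) ^ (N - 1) / \<epsilon>1 ^ N"
      using Q0 eps12 by simp
    then show ?thesis using mu unfolding N_def Q_def by linarith
  qed
  have key: "real Q * \<epsilon> * x i < \<mu> * \<epsilon>2" for i
  proof -
    have "real Q * \<epsilon> * x i \<le> real Q * \<epsilon> * (real N * (\<epsilon>2/\<epsilon>1)^N)"
      using xle[of i] Q0 unfolding N_def by (rule mult_left_mono)
    also have "\<dots> \<le> \<epsilon>2 * (real Q * \<epsilon> * real N * (2 * \<epsilon>2) ^ (N - 1) / \<epsilon>1 ^ N)"
      unfolding m2 using m1 eps12 by (intro mult_left_mono) auto
    also have "\<dots> < \<epsilon>2 * \<mu>" using mu eps12 unfolding N_def Q_def by (intro mult_strict_left_mono) auto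
    finally show ?thesis by (simp add: mult.commute)
  qed
  show ?thesis
    unfolding M_def[symmetric] hurwitz_def
  proof (intro allI impI)
    fix l assume "mat_eigenvalue M l"
    then obtain v :: "complex^('n \<times> 'q)" where v0: "v \<noteq> 0" and ev: "cmat M *v v = l *s v"
      unfolding mat_eigenvalue_def by blast
    show "Re l < 0"
    proof (rule ccontr)
      assume "\<not> Re l < 0"
      then have Rl: "Re l \<ge> 0" by simp
      define f where "f z = cmod (v $ z) / x (fst z)" for z
      define \<rho> where "\<rho> = Max (range f)"
      have fle: "f z \<le> \<rho>" for z unfolding \<rho>_def by (rule Max_ge) auto
      obtain i k where ik: "f (i,k) = \<rho>"
      proof -
        have "\<rho> \<in> range f" unfolding \<rho>_def by (rule Max_in) auto
        then obtain z where "f z = \<rho>" by auto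
        then show ?thesis using that[of "fst z" "snd z"] by simp
      qed
      obtain z0 where "v $ z0 \<noteq> 0" using v0 by (metis vec_eq_iff zero_index)
      then have "f z0 > 0" unfolding f_def using xpos by simp
      then have rpos: "\<rho> > 0" using fle[of z0] by linarith
      have vle: "cmod (v $ (j,m)) \<le> \<rho> * x j" for j m
        using fle[of "(j,m)"] xpos[of j] by (simp add: f_def divide_le_eq)
      define w where "w = v $ (i,k)"
      have wn: "cmod w = \<rho> * x i" using ik xpos[of i] unfolding f_def w_def by (auto simp: divide_eq_eq)
      have wpos: "cmod w > 0" using wn rpos xpos[of i] by simp
      have Ment: "M $ (i,k) $ (j,m) = (if i = j then S$k$m else 0) - \<mu> * (H$i$j * (if k = m then 1 else 0))" for j m
        by (simp add: M_def kron_def H_def mat_def)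
      have eqn: "l * w = (\<Sum>m\<in>UNIV. of_real (S$k$m) * v$(i,m)) - of_real \<mu> * (\<Sum>j\<in>UNIV. of_real (H$i$j) * v$(j,k))"
      proof -
        have "l * w = (cmat M *v v) $ (i,k)" using ev by (simp add: w_def)
        also have "\<dots> = (\<Sum>z\<in>UNIV. of_real (M$(i,k)$z) * v$z)" by (simp add: matrix_vector_mult_def cmat_def)
        also have "\<dots> = (\<Sum>j\<in>UNIV. \<Sum>m\<in>UNIV. of_real (M$(i,k)$(j,m)) * v$(j,m))" by (rule sum_pairs)
        also have "\<dots> = (\<Sum>j\<in>UNIV. \<Sum>m\<in>UNIV. (if i = j then of_real (S$k$m) * v$(j,m) else 0)
               - of_real \<mu> * (if k = m then of_real (H$i$j) * v$(j,m) else 0))"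
          unfolding Ment by (intro sum.cong refl) (auto simp: algebra_simps)
        also have "\<dots> = (\<Sum>m\<in>UNIV. of_real (S$k$m) * v$(i,m)) - of_real \<mu> * (\<Sum>j\<in>UNIV. of_real (H$i$j) * v$(j,k))"
        proof -
          have p1: "(\<Sum>j\<in>UNIV. \<Sum>m\<in>UNIV. (if i = j then of_real (S$k$m) * v$(j,m) else 0))
                   = (\<Sum>m\<in>UNIV. of_real (S$k$m) * v$(i,m))"
          proof -
            have "(\<Sum>j\<in>UNIV. \<Sum>m\<in>UNIV. (if i = j then of_real (S$k$m) * v$(j,m) else 0))
                = (\<Sum>j\<in>UNIV. if i = j then (\<Sum>m\<in>UNIV. of_real (S$k$m) * v$(j,m)) else 0)"
              by (intro sum.cong) auto
            then show ?thesis by (simp add: sum.delta)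
          qed
          have p2: "(\<Sum>m\<in>UNIV. of_real \<mu> * (if k = m then of_real (H$i$j) * v$(j,m) else 0))
                   = of_real \<mu> * (of_real (H$i$j) * v$(j,k))" for j
            by (simp add: sum_distrib_left[symmetric] sum.delta)
          show ?thesis by (simp only: sum_subtractf p1 p2 sum_distrib_left)
        qed
        finally show ?thesis .
      qed
      define A where "A m = Re (v$(i,m) * cnj w)" for m
      define B where "B j = Re (v$(j,k) * cnj w)" for j
      have Re_eq: "Re l * (cmod w)^2 = (\<Sum>m\<in>UNIV. S$k$m * A m) - \<mu> * (\<Sum>j\<in>UNIV. H$i$j * B j)"
      proof -
        have "l * w * cnj w = (\<Sum>m\<in>UNIV. of_real (S$k$m) * (v$(i,m) * cnj w))
                 - of_real \<mu> * (\<Sum>j\<in>UNIV. of_real (H$i$j) * (v$(j,k) * cnj w))"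
          unfolding eqn by (simp add: algebra_simps sum_distrib_left sum_distrib_right)
        then have "Re (l * w * cnj w) = Re ((\<Sum>m\<in>UNIV. of_real (S$k$m) * (v$(i,m) * cnj w))
                 - of_real \<mu> * (\<Sum>j\<in>UNIV. of_real (H$i$j) * (v$(j,k) * cnj w)))" by simp
        moreover have "l * w * cnj w = l * of_real ((cmod w)^2)"
          by (simp only: complex_norm_square mult.assoc)
        ultimately show ?thesis by (simp add: A_def B_def)
      qed
      have b1: "(\<Sum>m\<in>UNIV. S$k$m * A m) \<le> real Q * (\<epsilon> * (\<rho> * x i * cmod w))"
      proof -
        have "S$k$m * A m \<le> \<epsilon> * (\<rho> * x i * cmod w)" for m
        proof -
          have "\<bar>A m\<bar> \<le> cmod (v$(i,m)) * cmod w"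
            unfolding A_def by (metis abs_Re_le_cmod complex_mod_cnj norm_mult)
          also have "\<dots> \<le> \<rho> * x i * cmod w" using vle[of i m] by (intro mult_right_mono) auto
          finally have "\<bar>A m\<bar> \<le> \<rho> * x i * cmod w" .
          then have "\<bar>S$k$m\<bar> * \<bar>A m\<bar> \<le> \<epsilon> * (\<rho> * x i * cmod w)"
            using S_bound eps_pos by (intro mult_mono) auto
          then show ?thesis by (metis abs_ge_self abs_mult order_trans)
        qed
        then have "(\<Sum>m\<in>UNIV. S$k$m * A m) \<le> of_nat (card (UNIV::'q set)) * (\<epsilon> * (\<rho> * x i * cmod w))"
          by (rule sum_bounded_above)
        then show ?thesis by (simp add: Q_def)
      qed
      have b2: "(\<Sum>j\<in>UNIV. H$i$j * B j) \<ge> (\<Sum>j\<in>UNIV. H$i$j * (\<rho> * x j * cmod w))"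
      proof (rule sum_mono)
        fix j
        show "H$i$j * (\<rho> * x j * cmod w) \<le> H$i$j * B j"
        proof (cases "j = i")
          case True
          have "B i = (cmod w)^2" unfolding B_def w_def[symmetric]
            by (simp add: complex_norm_square[symmetric] del: of_real_power)
          then show ?thesis using True wn by (simp add: power2_eq_square)
        next
          case False
          have Hn: "H$i$j \<le> 0" using False a_nonneg by (simp add: H_def follower_matrix_def)
          have "B j \<le> cmod (v$(j,k)) * cmod w"
            unfolding B_def by (metis complex_Re_le_cmod complex_mod_cnj norm_mult)
          also have "\<dots> \<le> \<rho> * x j * cmod w" using vle[of j k] by (intro mult_right_mono) auto
          finally show ?thesis using Hn by (rule mult_left_mono_neg)
        qed
      qed
      have b3: "(\<Sum>j\<in>UNIV. H$i$j * (\<rho> * x j * cmod w)) = \<rho> * cmod w * (\<Sum>j\<in>UNIV. H$i$j * x j)"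
        by (simp add: sum_distrib_left algebra_simps)
      have b4: "\<rho> * cmod w * \<epsilon>2 \<le> \<rho> * cmod w * (\<Sum>j\<in>UNIV. H$i$j * x j)"
        using Hx[of i] rpos wpos unfolding H_def by (intro mult_left_mono) auto
      have "Re l * (cmod w)^2 \<le> \<rho> * cmod w * (real Q * \<epsilon> * x i - \<mu> * \<epsilon>2)"
      proof -
        have "\<mu> * (\<rho> * cmod w * \<epsilon>2) \<le> \<mu> * (\<Sum>j\<in>UNIV. H$i$j * B j)"
          using b2 b3 b4 mupos by (intro mult_left_mono) auto
        then show ?thesis using Re_eq b1 by (simp add: algebra_simps)
      qed
      also have "\<dots> < 0" using key[of i] rpos wpos by (intro mult_pos_neg) auto
      finally show False using Rl by (metis mult_nonneg_nonneg not_less zero_le_power2)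
    qed
  qed
qed

end
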